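(* Let $G=(V,E)$ be a finite, simple, connected graph with $\kappa(x,y)\geq K>0$ for all $x\sim y$, and suppose $\operatorname{diam}_{\operatorname{eff}}(G)=\frac{\max_v\operatorname{Deg}(v)}{K}$. Let $x\in V$. Then \[ \Delta d(x,\cdot)=\operatorname{Deg}(x)-K\,d(x,\cdot). \] Moreover, $\operatorname{Deg}(v)=\max_w\operatorname{Deg}(w)$ for all $v\in V$, and $\kappa(u,v)=K$ for all edges $u\sim v$.
   Context: $d$ is the combinatorial distance, $\operatorname{Deg}$ the degree, $\operatorname{diam}_{\operatorname{eff}}(G)=\frac{1}{|V|^2}\sum_{x,y}d(x,y)$. Laplacian $\Delta f(x)=\sum_{y\sim x}(f(y)-f(x))$. Ollivier curvature of an edge: $\kappa(x,y)=\inf\{\Delta f(x)-\Delta f(y): f(y)-f(x)=1,\ \max_{u\sim v}|f(u)-f(v)|=1\}$. *)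

theory Defs
  imports "HOL-Analysis.Analysis"
begin

definition simple_graph :: "'a set \<Rightarrow> ('a \<Rightarrow> 'a \<Rightarrow> bool) \<Rightarrow> bool" where
  "simple_graph V E \<longleftrightarrow> finite V \<and> V \<noteq> {} \<and>
     (\<forall>u v. E u v \<longrightarrow> u \<in> V \<and> v \<in> V) \<and>
     (\<forall>u v. E u v \<longrightarrow> E v u) \<and> (\<forall>u. \<not> E u u)"

text \<open>A walk of length n from x to y: a vertex list p of length n+1.\<close>
definition is_walk :: "('a \<Rightarrow> 'a \<Rightarrow> bool) \<Rightarrow> 'a list \<Rightarrow> 'a \<Rightarrow> 'a \<Rightarrow> bool" where
  "is_walk E p x y \<longleftrightarrow> p \<noteq> [] \<and> hd p = x \<and> last p = y \<and>
     (\<forall>i. Suc i < length p \<longrightarrow> E (p ! i) (p ! Suc i))"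

definition connected_graph :: "'a set \<Rightarrow> ('a \<Rightarrow> 'a \<Rightarrow> bool) \<Rightarrow> bool" where
  "connected_graph V E \<longleftrightarrow> (\<forall>x\<in>V. \<forall>y\<in>V. \<exists>p. is_walk E p x y)"

definition gdist :: "('a \<Rightarrow> 'a \<Rightarrow> bool) \<Rightarrow> 'a \<Rightarrow> 'a \<Rightarrow> nat" where
  "gdist E x y = (LEAST n. \<exists>p. is_walk E p x y \<and> length p = Suc n)"

definition Deg :: "'a set \<Rightarrow> ('a \<Rightarrow> 'a \<Rightarrow> bool) \<Rightarrow> 'a \<Rightarrow> nat" where
  "Deg V E x = card {y\<in>V. E x y}"

definition maxDeg :: "'a set \<Rightarrow> ('a \<Rightarrow> 'a \<Rightarrow> bool) \<Rightarrow> nat" where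
  "maxDeg V E = Max (Deg V E ` V)"

definition diam_eff :: "'a set \<Rightarrow> ('a \<Rightarrow> 'a \<Rightarrow> bool) \<Rightarrow> real" where
  "diam_eff V E = (1 / real (card V) ^ 2) * (\<Sum>x\<in>V. \<Sum>y\<in>V. real (gdist E x y))"

definition laplacian :: "'a set \<Rightarrow> ('a \<Rightarrow> 'a \<Rightarrow> bool) \<Rightarrow> ('a \<Rightarrow> real) \<Rightarrow> 'a \<Rightarrow> real" where
  "laplacian V E f x = (\<Sum>y\<in>{y\<in>V. E x y}. f y - f x)"

text \<open>Ollivier curvature via the Lipschitz/Laplacian formula.\<close>
definition ollivier :: "'a set \<Rightarrow> ('a \<Rightarrow> 'a \<Rightarrow> bool) \<Rightarrow> 'a \<Rightarrow> 'a \<Rightarrow> real" where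
  "ollivier V E x y = Inf {laplacian V E f x - laplacian V E f y | f.
      f y - f x = 1 \<and> Max {\<bar>f u - f v\<bar> | u v. E u v} = 1}"

end

theory Submission
  imports Defs
begin

context
  fixes V :: "'a set" and E :: "'a \<Rightarrow> 'a \<Rightarrow> bool"
  assumes G: "simple_graph V E" and C: "connected_graph V E"
begin

lemma finV: "finite V" using G unfolding simple_graph_def by blast
lemma symE: "E u v \<Longrightarrow> E v u" using G unfolding simple_graph_def by blast
lemma irrE: "\<not> E u u" using G unfolding simple_graph_def by blast
lemma inV1: "E u v \<Longrightarrow> u \<in> V" using G unfolding simple_graph_def by blast
lemma inV2: "E u v \<Longrightarrow> v \<in> V" using G unfolding simple_graph_def by blast

lemma walk_ex:
  assumes "x \<in> V" "y \<in> V"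
  shows "\<exists>p. is_walk E p x y \<and> length p = Suc (gdist E x y)"
proof -
  obtain p where p: "is_walk E p x y" using C assms unfolding connected_graph_def by blast
  then have "p \<noteq> []" unfolding is_walk_def by blast
  then have "\<exists>n p. is_walk E p x y \<and> length p = Suc n" using p
    by (metis Suc_pred length_greater_0_conv)
  from LeastI_ex[OF this] show ?thesis unfolding gdist_def by blast
qed

lemma gdist_le:
  assumes "is_walk E p x y"
  shows "gdist E x y \<le> length p - 1"
proof -
  have "p \<noteq> []" using assms unfolding is_walk_def by blast
  then have "\<exists>q. is_walk E q x y \<and> length q = Suc (length p - 1)" using assms by auto
  then show ?thesis unfolding gdist_def by (rule Least_le)
qed

lemma gdist_refl: "gdist E x x = 0"
proof -
  have "is_walk E [x] x x" unfolding is_walk_def by auto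
  from gdist_le[OF this] show ?thesis by simp
qed

lemma gdist0:
  assumes "x \<in> V" "z \<in> V" "gdist E x z = 0"
  shows "x = z"
proof -
  obtain p where p0: "is_walk E p x z" "length p = Suc (gdist E x z)" using walk_ex[OF assms(1,2)] by blast
  have p: "is_walk E p x z" "length p = Suc 0" using p0 assms(3) by simp_all
  have "p = [hd p]" using p(2) by (cases p) auto
  moreover have "hd p = x" "last p = z" using p(1) unfolding is_walk_def by blast+
  ultimately show ?thesis by (metis last.simps)
qed

lemma gdist_step:
  assumes "x \<in> V" "y \<in> V" "E y w"
  shows "gdist E x w \<le> gdist E x y + 1"
proof -
  obtain p where p: "is_walk E p x y" "length p = Suc (gdist E x y)" using walk_ex[OF assms(1,2)] by blast
  have "is_walk E (p @ [w]) x w"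
    unfolding is_walk_def
  proof (intro conjI allI impI)
    show "p @ [w] \<noteq> []" by simp
    have "hd p = x" "p \<noteq> []" using p(1) unfolding is_walk_def by blast+
    then show "hd (p @ [w]) = x" by simp
    show "last (p @ [w]) = w" by simp
    fix i assume i: "Suc i < length (p @ [w])"
    have st: "\<forall>i. Suc i < length p \<longrightarrow> E (p ! i) (p ! Suc i)" using p unfolding is_walk_def by blast
    have ne: "p \<noteq> []" and lp: "last p = y" using p unfolding is_walk_def by blast+
    show "E ((p @ [w]) ! i) ((p @ [w]) ! Suc i)"
    proof (cases "Suc i < length p")
      case True
      then have "(p @ [w]) ! i = p ! i" "(p @ [w]) ! Suc i = p ! Suc i"
        by (simp_all add: nth_append)
      then show ?thesis using st True by metis
    next
      case False
      then have ii: "Suc i = length p" using i by simp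
      then have "(p @ [w]) ! Suc i = w" by (simp add: nth_append)
      moreover have "(p @ [w]) ! i = p ! i" using ii by (simp add: nth_append)
      moreover have "p ! i = y" using ii ne lp by (metis last_conv_nth diff_Suc_1)
      ultimately show ?thesis using assms(3) by simp
    qed
  qed
  from gdist_le[OF this] p show ?thesis by simp
qed

lemma gdist_adj:
  assumes "E x w"
  shows "gdist E x w = 1"
proof -
  have "is_walk E [x, w] x w" unfolding is_walk_def
  proof (intro conjI allI impI)
    fix i assume "Suc i < length [x, w]"
    then have "i = 0" by simp
    then show "E ([x, w] ! i) ([x, w] ! Suc i)" using assms by simp
  qed simp_all
  from gdist_le[OF this] have "gdist E x w \<le> 1" by simp
  moreover have "gdist E x w \<noteq> 0"
    using gdist0[OF inV1[OF assms] inV2[OF assms]] assms irrE by blast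
  ultimately show ?thesis by simp
qed

lemma gdist_pred:
  assumes "x \<in> V" "z \<in> V" "gdist E x z > 0"
  shows "\<exists>y\<in>V. E y z \<and> gdist E x y + 1 = gdist E x z"
proof -
  define n where "n = gdist E x z"
  obtain p where p: "is_walk E p x z" "length p = Suc n" using walk_ex[OF assms(1,2)] unfolding n_def by blast
  have n0: "n > 0" using assms n_def by simp
  define y where "y = p ! (n - 1)"
  have ne: "p \<noteq> []" and hp: "hd p = x" and lp: "last p = z"
    and st: "\<forall>i. Suc i < length p \<longrightarrow> E (p ! i) (p ! Suc i)"
    using p(1) unfolding is_walk_def by blast+
  have lz: "p ! n = z" using lp ne p(2) last_conv_nth[OF ne] by simp
  have n1: "Suc (n - 1) = n" using n0 by simp
  have "Suc (n - 1) < length p" using p(2) n1 by simp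
  then have "E (p ! (n - 1)) (p ! Suc (n - 1))" using st by blast
  then have Eyz: "E y z" unfolding y_def using n1 lz by simp
  have yV: "y \<in> V" using inV1[OF Eyz] .
  have "is_walk E (take n p) x y"
    unfolding is_walk_def
  proof (intro conjI allI impI)
    show "take n p \<noteq> []" using n0 ne by simp
    show "hd (take n p) = x" using hp ne n0 by simp
    have "take n p \<noteq> []" using n0 ne by simp
    then have "last (take n p) = take n p ! (n - 1)" using p(2) by (simp add: last_conv_nth)
    then show "last (take n p) = y" unfolding y_def using n0 by simp
    fix i assume "Suc i < length (take n p)"
    then have "Suc i < length p" "Suc i < n" by simp_all
    then show "E (take n p ! i) (take n p ! Suc i)" using st by simp
  qed
  from gdist_le[OF this] have "gdist E x y \<le> n - 1" using p by simp
  moreover have "gdist E x z \<le> gdist E x y + 1" using gdist_step[OF assms(1) yV Eyz] .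
  ultimately have "gdist E x y + 1 = gdist E x z" using n_def n0 by linarith
  then show ?thesis using yV Eyz by blast
qed

lemma gdist_lip:
  assumes "x \<in> V" "E a b"
  shows "\<bar>real (gdist E x a) - real (gdist E x b)\<bar> \<le> 1"
  using gdist_step[OF assms(1) inV1[OF assms(2)] assms(2)]
    gdist_step[OF assms(1) inV2[OF assms(2)] symE[OF assms(2)]] by linarith

lemma ollivier_le:
  assumes uv: "E u v" and lip: "\<forall>a b. E a b \<longrightarrow> \<bar>f a - f b\<bar> \<le> 1" and fv: "f v - f u = 1"
  shows "ollivier V E u v \<le> laplacian V E f u - laplacian V E f v"
proof -
  let ?S = "{laplacian V E f u - laplacian V E f v | f.
      f v - f u = 1 \<and> Max {\<bar>f a - f b\<bar> | a b. E a b} = 1}"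
  have finM: "finite {\<bar>g a - g b\<bar> | a b. E a b}" for g :: "'a \<Rightarrow> real"
  proof -
    have "{\<bar>g a - g b\<bar> | a b. E a b} \<subseteq> (\<lambda>(a,b). \<bar>g a - g b\<bar>) ` (V \<times> V)"
      using inV1 inV2 by fastforce
    then show ?thesis using finite_subset finV by blast
  qed
  have "Max {\<bar>f a - f b\<bar> | a b. E a b} = 1"
  proof (rule Max_eqI[OF finM])
    show "y \<le> 1" if "y \<in> {\<bar>f a - f b\<bar> | a b. E a b}" for y using that lip by auto
    show "1 \<in> {\<bar>f a - f b\<bar> | a b. E a b}" using uv fv
      by (smt (verit, best) mem_Collect_eq)
  qed
  then have mem: "laplacian V E f u - laplacian V E f v \<in> ?S" using fv by blast
  have bdd: "bdd_below ?S"
  proof (rule bdd_belowI)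
    fix s assume "s \<in> ?S"
    then obtain g where g: "s = laplacian V E g u - laplacian V E g v"
      "Max {\<bar>g a - g b\<bar> | a b. E a b} = 1" by blast
    have gl: "\<bar>g a - g b\<bar> \<le> 1" if "E a b" for a b
    proof -
      from that have "\<bar>g a - g b\<bar> \<in> {\<bar>g a - g b\<bar> | a b. E a b}" by blast
      from Max_ge[OF finM[of g] this] g(2) show ?thesis by simp
    qed
    have "laplacian V E g u \<ge> (\<Sum>y\<in>{y\<in>V. E u y}. -1)"
      unfolding laplacian_def by (rule sum_mono) (use gl in force)
    moreover have "laplacian V E g v \<le> (\<Sum>y\<in>{y\<in>V. E v y}. 1)"
      unfolding laplacian_def by (rule sum_mono) (use gl in force)
    ultimately show "- real (card {y\<in>V. E u y}) - real (card {y\<in>V. E v y}) \<le> s"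
      using g(1) by simp
  qed
  show ?thesis unfolding ollivier_def by (rule cInf_lower[OF mem bdd])
qed

lemma lap_sum0: "(\<Sum>z\<in>V. laplacian V E f z) = 0"
proof -
  have "(\<Sum>z\<in>V. laplacian V E f z) = (\<Sum>z\<in>V. \<Sum>w\<in>V. if E z w then f w - f z else 0)"
    unfolding laplacian_def using finV by (simp add: sum.inter_filter)
  also have "\<dots> = (\<Sum>z\<in>V. \<Sum>w\<in>V. if E z w then f w else 0) - (\<Sum>z\<in>V. \<Sum>w\<in>V. if E z w then f z else 0)"
    by (simp add: sum_subtractf[symmetric] if_distrib cong: if_cong)
  also have "(\<Sum>z\<in>V. \<Sum>w\<in>V. if E z w then f z else 0) = (\<Sum>w\<in>V. \<Sum>z\<in>V. if E z w then f z else 0)"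
    by (rule sum.swap)
  also have "\<dots> = (\<Sum>z\<in>V. \<Sum>w\<in>V. if E z w then f w else 0)"
    using symE by (intro sum.cong refl) (metis)
  finally show ?thesis by simp
qed

lemma lap_x:
  assumes "x \<in> V"
  shows "laplacian V E (\<lambda>w. real (gdist E x w)) x = real (Deg V E x)"
  unfolding laplacian_def Deg_def using gdist_adj gdist_refl by simp

lemma key:
  assumes x: "x \<in> V" and K: "\<forall>u v. E u v \<longrightarrow> ollivier V E u v \<ge> K"
  shows "z \<in> V \<Longrightarrow> laplacian V E (\<lambda>w. real (gdist E x w)) z \<le> real (Deg V E x) - K * real (gdist E x z)"
proof (induction "gdist E x z" arbitrary: z)
  case 0
  then have "z = x" using gdist0[OF x] by metis
  then show ?case using lap_x[OF x] gdist_refl by simp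
next
  case (Suc n)
  obtain y where y: "y \<in> V" "E y z" "gdist E x y + 1 = gdist E x z"
    using gdist_pred[OF x Suc.prems] Suc.hyps by auto
  have IH: "laplacian V E (\<lambda>w. real (gdist E x w)) y \<le> real (Deg V E x) - K * real n"
  proof -
    have h: "n = gdist E x y" using y(3) Suc.hyps(2) by simp
    show ?thesis using Suc.hyps(1)[OF h y(1)] unfolding h[symmetric] .
  qed
  have "ollivier V E y z \<le> laplacian V E (\<lambda>w. real (gdist E x w)) y - laplacian V E (\<lambda>w. real (gdist E x w)) z"
    by (rule ollivier_le[OF y(2)]) (use gdist_lip[OF x] y in auto)
  moreover have "K \<le> ollivier V E y z" using K y by blast
  moreover have "K * real (gdist E x z) = K * real n + K"
    using Suc.hyps(2)[symmetric] by (simp add: algebra_simps)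
  ultimately show ?case using IH by linarith
qed

end

theorem lemma3p2:
  fixes V :: "'a set" and E :: "'a \<Rightarrow> 'a \<Rightarrow> bool" and K :: real and x :: 'a
  assumes "simple_graph V E" and "connected_graph V E"
    and "K > 0"
    and "\<forall>u v. E u v \<longrightarrow> ollivier V E u v \<ge> K"
    and "diam_eff V E = real (maxDeg V E) / K"
    and "x \<in> V"
  shows "(\<forall>z\<in>V. laplacian V E (\<lambda>w. real (gdist E x w)) z
                 = real (Deg V E x) - K * real (gdist E x z))
      \<and> (\<forall>v\<in>V. Deg V E v = maxDeg V E)
      \<and> (\<forall>u v. E u v \<longrightarrow> ollivier V E u v = K)"
proof -
  note G = assms(1) and C = assms(2)
  have fin: "finite V" using finV[OF G C] .
  have Vne: "V \<noteq> {}" using assms(1) unfolding simple_graph_def by blast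
  define L where "L a z = laplacian V E (\<lambda>w. real (gdist E a w)) z" for a z
  define d where "d a z = real (gdist E a z)" for a z
  define D where "D = real (maxDeg V E)"
  define n where "n = real (card V)"
  have npos: "n > 0" unfolding n_def using fin Vne by (simp add: card_gt_0_iff)
  define h where "h a z = real (Deg V E a) - K * d a z - L a z" for a z
  have hnn: "h a z \<ge> 0" if "a \<in> V" "z \<in> V" for a z
    using key[OF G C that(1) assms(4) that(2)] unfolding h_def L_def d_def by simp
  have Dle: "real (Deg V E v) \<le> D" if "v \<in> V" for v
  proof -
    have "Deg V E v \<le> maxDeg V E" unfolding maxDeg_def using fin that by simp
    then show ?thesis unfolding D_def by simp
  qed
  have hsum: "(\<Sum>z\<in>V. h a z) = n * real (Deg V E a) - K * (\<Sum>z\<in>V. d a z)" for a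
  proof -
    have "(\<Sum>z\<in>V. h a z) = (\<Sum>z\<in>V. real (Deg V E a)) - K * (\<Sum>z\<in>V. d a z) - (\<Sum>z\<in>V. L a z)"
      unfolding h_def by (simp add: sum_subtractf sum_distrib_left)
    moreover have "(\<Sum>z\<in>V. L a z) = 0" unfolding L_def using lap_sum0[OF G C] by simp
    ultimately show ?thesis unfolding n_def by simp
  qed
  have dsum: "K * (\<Sum>a\<in>V. \<Sum>z\<in>V. d a z) = n^2 * D"
  proof -
    have "(1 / n ^ 2) * (\<Sum>a\<in>V. \<Sum>z\<in>V. d a z) = D / K"
      using assms(5) unfolding diam_eff_def n_def d_def D_def by simp
    then show ?thesis using npos assms(3) by (simp add: field_simps)
  qed
  have tot: "(\<Sum>a\<in>V. \<Sum>z\<in>V. h a z) + n * (\<Sum>a\<in>V. D - real (Deg V E a)) = 0"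
  proof -
    have "(\<Sum>a\<in>V. \<Sum>z\<in>V. h a z) = n * (\<Sum>a\<in>V. real (Deg V E a)) - K * (\<Sum>a\<in>V. \<Sum>z\<in>V. d a z)"
      by (simp add: hsum sum_subtractf sum_distrib_left)
    moreover have "n * (\<Sum>a\<in>V. D - real (Deg V E a)) = n * n * D - n * (\<Sum>a\<in>V. real (Deg V E a))"
      by (simp add: sum_subtractf n_def algebra_simps)
    ultimately show ?thesis using dsum by (simp add: power2_eq_square)
  qed
  have A: "(\<Sum>a\<in>V. \<Sum>z\<in>V. h a z) \<ge> 0" using hnn by (intro sum_nonneg) auto
  have B: "(\<Sum>a\<in>V. D - real (Deg V E a)) \<ge> 0" using Dle by (intro sum_nonneg) auto
  have A0: "(\<Sum>a\<in>V. \<Sum>z\<in>V. h a z) = 0" and B0: "(\<Sum>a\<in>V. D - real (Deg V E a)) = 0"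
    using tot A B npos by (smt (verit) mult_pos_pos mult_nonneg_nonneg)+
  have degeq: "real (Deg V E v) = D" if "v \<in> V" for v
  proof -
    have "\<forall>a\<in>V. D - real (Deg V E a) = 0"
      using B0 Dle fin by (subst sum_nonneg_eq_0_iff[symmetric]) auto
    then show ?thesis using that by simp
  qed
  have hz: "h a z = 0" if "a \<in> V" "z \<in> V" for a z
  proof -
    have "\<forall>a\<in>V. (\<Sum>z\<in>V. h a z) = 0"
      using A0 fin hnn by (subst sum_nonneg_eq_0_iff[symmetric]) (auto intro: sum_nonneg)
    then have "(\<Sum>z\<in>V. h a z) = 0" using that by blast
    then have "\<forall>z\<in>V. h a z = 0"
      using fin hnn that by (subst sum_nonneg_eq_0_iff[symmetric]) auto
    then show ?thesis using that by blast
  qed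
  have lapeq: "L a z = real (Deg V E a) - K * d a z" if "a \<in> V" "z \<in> V" for a z
    using hz[OF that] unfolding h_def by simp
  have P1: "\<forall>z\<in>V. laplacian V E (\<lambda>w. real (gdist E x w)) z
                 = real (Deg V E x) - K * real (gdist E x z)"
    using lapeq assms(6) unfolding L_def d_def by blast
  have P2: "\<forall>v\<in>V. Deg V E v = maxDeg V E" using degeq unfolding D_def by simp
  have P3: "ollivier V E u v = K" if uv: "E u v" for u v
  proof -
    have uV: "u \<in> V" and vV: "v \<in> V" using inV1[OF G C uv] inV2[OF G C uv] by auto
    have "ollivier V E u v \<le> L u u - L u v"
      unfolding L_def
      by (rule ollivier_le[OF G C uv]) (use gdist_lip[OF G C uV] gdist_adj[OF G C uv] gdist_refl[OF G C] in auto)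
    also have "L u u - L u v = K"
      using lapeq[OF uV uV] lapeq[OF uV vV] gdist_adj[OF G C uv] gdist_refl[OF G C]
      unfolding d_def by simp
    finally show ?thesis using assms(4) uv by (meson order_antisym)
  qed
  show ?thesis using P1 P2 P3 by blast
qed

end
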